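(* The structure $\varphi$ is Abelian, i.e. $[\varphi x,\varphi y]=[x,y]$ for all $x,y\in\mathfrak l$, if and only if $(L,\varphi,\xi,\eta,g)$ belongs to $\mathcal{F}_1\oplus\mathcal{F}_8\oplus\mathcal{F}_{10}$ with $2\lambda=\nu$, where $\lambda=F_{101}$ and $\nu=F_{011}$.
   Context: Let $L$ be a 3-dimensional real connected Lie group with Lie algebra $\mathfrak l$, and let $\{E_0,E_1,E_2\}$ be a basis of left-invariant vector fields, with $[E_i,E_j]=C_{ij}^kE_k$. Define the left-invariant almost contact structure $(\varphi,\xi,\eta)$ by $\varphi E_0=0$, $\varphi E_1=E_2$, $\varphi E_2=-E_1$, $\xi=E_0$, $\eta(E_0)=1$, $\eta(E_1)=\eta(E_2)=0$, and the left-invariant pseudo-Riemannian metric $g$ by $g(E_0,E_0)=g(E_1,E_1)=-g(E_2,E_2)=1$, $g(E_i,E_j)=0$ for $i\neq j$. Let $\nabla$ be the Levi-Civita connection of $g$, $F(x,y,z)=g((\nabla_x\varphi)y,z)$, and $F_{ijk}=F(E_i,E_j,E_k)$. The manifold belongs to $\mathcal{F}_1\oplus\mathcal{F}_8\oplus\mathcal{F}_{10}$ iff all $F_{ijk}$ vanish except possibly $F_{111}=F_{122}$, $F_{211}=F_{222}$ (the $\mathcal{F}_1$ part), $F_{101}=F_{110}=F_{202}=F_{220}=:\lambda$ (the $\mathcal{F}_8$ part) and $F_{011}=F_{022}=:\nu$ (the $\mathcal{F}_{10}$ part). *)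

theory Defs
  imports Complex_Main
begin

text \<open>Left-invariant vector fields on the 3-dimensional Lie group L are identified with
  the Lie algebra l; an element x of l is encoded by its coordinates x 0, x 1, x 2 with
  respect to the basis E0, E1, E2 (values at indices ge 3 are ignored).
  The structure constants are C i j k, i.e. [E_i,E_j] = sum_k C i j k E_k.\<close>

type_synonym vec3 = "nat \<Rightarrow> real"

definition basis3 :: "nat \<Rightarrow> vec3" where
  "basis3 i = (\<lambda>k. if k = i then 1 else 0)"

definition lie_br :: "(nat \<Rightarrow> nat \<Rightarrow> nat \<Rightarrow> real) \<Rightarrow> vec3 \<Rightarrow> vec3 \<Rightarrow> vec3" where
  "lie_br C x y = (\<lambda>k. \<Sum>i<3. \<Sum>j<3. x i * y j * C i j k)"

definition is_lie_algebra3 :: "(nat \<Rightarrow> nat \<Rightarrow> nat \<Rightarrow> real) \<Rightarrow> bool" where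
  "is_lie_algebra3 C \<longleftrightarrow>
     (\<forall>x y. \<forall>k<3. lie_br C x y k = - lie_br C y x k) \<and>
     (\<forall>x y z. \<forall>k<3. lie_br C x (lie_br C y z) k + lie_br C y (lie_br C z x) k
                     + lie_br C z (lie_br C x y) k = 0)"

definition phi3 :: "vec3 \<Rightarrow> vec3" where
  "phi3 x = (\<lambda>k. if k = 1 then - x 2 else if k = 2 then x 1 else 0)"

definition eps3 :: "nat \<Rightarrow> real" where
  "eps3 k = (if k = 2 then -1 else 1)"

definition g3 :: "vec3 \<Rightarrow> vec3 \<Rightarrow> real" where
  "g3 x y = (\<Sum>k<3. eps3 k * x k * y k)"

text \<open>Levi-Civita connection on left-invariant fields via the Koszul formula
  2 g(nabla_X Y, Z) = g([X,Y],Z) - g([Y,Z],X) + g([Z,X],Y).\<close>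
definition lc_nabla :: "(nat \<Rightarrow> nat \<Rightarrow> nat \<Rightarrow> real) \<Rightarrow> vec3 \<Rightarrow> vec3 \<Rightarrow> vec3" where
  "lc_nabla C x y = (\<lambda>k. eps3 k / 2 *
      (g3 (lie_br C x y) (basis3 k) - g3 (lie_br C y (basis3 k)) x
       + g3 (lie_br C (basis3 k) x) y))"

definition Ften :: "(nat \<Rightarrow> nat \<Rightarrow> nat \<Rightarrow> real) \<Rightarrow> vec3 \<Rightarrow> vec3 \<Rightarrow> vec3 \<Rightarrow> real" where
  "Ften C x y z = g3 (\<lambda>k. lc_nabla C x (phi3 y) k - phi3 (lc_nabla C x y) k) z"

definition Fc :: "(nat \<Rightarrow> nat \<Rightarrow> nat \<Rightarrow> real) \<Rightarrow> nat \<Rightarrow> nat \<Rightarrow> nat \<Rightarrow> real" where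
  "Fc C i j k = Ften C (basis3 i) (basis3 j) (basis3 k)"

definition phi_abelian :: "(nat \<Rightarrow> nat \<Rightarrow> nat \<Rightarrow> real) \<Rightarrow> bool" where
  "phi_abelian C \<longleftrightarrow> (\<forall>x y. \<forall>k<3. lie_br C (phi3 x) (phi3 y) k = lie_br C x y k)"

definition in_F1_F8_F10 :: "(nat \<Rightarrow> nat \<Rightarrow> nat \<Rightarrow> real) \<Rightarrow> bool" where
  "in_F1_F8_F10 C \<longleftrightarrow>
     (\<forall>i<3. \<forall>j<3. \<forall>k<3. (i, j, k) \<notin>
        {(1,1,1), (1,2,2), (2,1,1), (2,2,2), (1,0,1), (1,1,0), (2,0,2), (2,2,0), (0,1,1), (0,2,2)}
        \<longrightarrow> Fc C i j k = 0) \<and>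
     Fc C 1 1 1 = Fc C 1 2 2 \<and> Fc C 2 1 1 = Fc C 2 2 2 \<and>
     Fc C 1 0 1 = Fc C 1 1 0 \<and> Fc C 1 1 0 = Fc C 2 0 2 \<and> Fc C 2 0 2 = Fc C 2 2 0 \<and>
     Fc C 0 1 1 = Fc C 0 2 2"

end

theory Submission
  imports Defs
begin

lemma all3: "(\<forall>i<(3::nat). P i) \<longleftrightarrow> P 0 \<and> P 1 \<and> P 2"
proof -
  have "\<And>i::nat. i<3 \<longleftrightarrow> i=0 \<or> i=1 \<or> i=2" by auto
  then show ?thesis by auto
qed

lemma sum3: "(\<Sum>i<(3::nat). f i) = f 0 + f 1 + f 2"
  by (simp add: numeral_3_eq_3 numeral_2_eq_2)

lemma lie_br_basis: "i < 3 \<Longrightarrow> j < 3 \<Longrightarrow> lie_br C (basis3 i) (basis3 j) k = C i j k"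
proof -
  assume "i<3" "j<3"
  then have "i=0 \<or> i=1 \<or> i=2" "j=0 \<or> j=1 \<or> j=2" by auto
  then show ?thesis unfolding lie_br_def basis3_def sum3 by auto
qed

lemma anti: assumes "is_lie_algebra3 C" "i < 3" "j < 3" "k < 3"
  shows "C i j k = - C j i k"
  using assms lie_br_basis[of i j C k] lie_br_basis[of j i C k]
  unfolding is_lie_algebra3_def by metis

theorem theorem2p5:
  fixes C :: "nat \<Rightarrow> nat \<Rightarrow> nat \<Rightarrow> real"
  assumes "is_lie_algebra3 C"
  shows "phi_abelian C \<longleftrightarrow> (in_F1_F8_F10 C \<and> 2 * Fc C 1 0 1 = Fc C 0 1 1)"
proof -
  have A: "\<And>i j k. i<3 \<Longrightarrow> j<3 \<Longrightarrow> k<3 \<Longrightarrow> C i j k = - C j i k" using anti[OF assms] by blast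
  have E: "\<And>k. k<3 \<Longrightarrow> C 1 0 k = - C 0 1 k \<and> C 2 0 k = - C 0 2 k \<and> C 2 1 k = - C 1 2 k
      \<and> C 0 0 k = 0 \<and> C 1 1 k = 0 \<and> C 2 2 k = 0"
    using A[of 1 0] A[of 2 0] A[of 2 1] A[of 0 0] A[of 1 1] A[of 2 2] by simp
  note E0 = E[of 0, simplified] and E1 = E[of 1, simplified] and E2 = E[of 2, simplified]
  have F: "in_F1_F8_F10 C \<and> 2 * Fc C 1 0 1 = Fc C 0 1 1 \<longleftrightarrow>
     (C 0 1 0 = 0 \<and> C 0 1 1 = 0 \<and> C 0 1 2 = 0 \<and> C 0 2 0 = 0 \<and> C 0 2 1 = 0 \<and> C 0 2 2 = 0)"
    unfolding in_F1_F8_F10_def all3 Fc_def Ften_def lc_nabla_def g3_def lie_br_def basis3_def phi3_def eps3_def sum3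
    using E0 E1 E2 by (simp add: field_simps) (smt (verit))
  have P: "phi_abelian C \<longleftrightarrow>
     (C 0 1 0 = 0 \<and> C 0 1 1 = 0 \<and> C 0 1 2 = 0 \<and> C 0 2 0 = 0 \<and> C 0 2 1 = 0 \<and> C 0 2 2 = 0)"
  proof
    assume PA: "phi_abelian C"
    have z: "lie_br C (phi3 (basis3 0)) y k = 0" for y k
      unfolding lie_br_def phi3_def basis3_def sum3 by simp
    have "C 0 j k = 0" if "j < 3" "k < 3" for j k
      using PA that z[of "phi3 (basis3 j)" k] lie_br_basis[of 0 j C k]
      unfolding phi_abelian_def by (metis zero_less_numeral)
    then show "C 0 1 0 = 0 \<and> C 0 1 1 = 0 \<and> C 0 1 2 = 0 \<and> C 0 2 0 = 0 \<and> C 0 2 1 = 0 \<and> C 0 2 2 = 0"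
      by simp
  next
    assume Z: "C 0 1 0 = 0 \<and> C 0 1 1 = 0 \<and> C 0 1 2 = 0 \<and> C 0 2 0 = 0 \<and> C 0 2 1 = 0 \<and> C 0 2 2 = 0"
    show "phi_abelian C"
      unfolding phi_abelian_def all3 lie_br_def phi3_def sum3
      using E0 E1 E2 Z by (simp add: algebra_simps)
  qed
  show ?thesis using F P by simp
qed

end
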